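(* Let $0<\alpha<1$, $\lambda\ge 0$, $v>0$, $D>0$, $T>0$, $L>0$, integers $n\ge 1$, $K\ge 2$, grading exponent $r\ge 1$, and let $h=L/K$, $x_i=ih$, $t_j=(j/n)^rT$, $\tau_j=t_{j+1}-t_j$. Consider the implicit scheme: for $i=1,\ldots,K-1$, $l=1,\ldots,n$, $$\frac{1}{\Gamma(2-\alpha)}\sum_{j=0}^{l-1} \tau_{j}^{-\alpha}a_{j,l}\left(Y_i^{j+1}-Y_i^{j}\right)=-v \frac{Y_{i+1}^l-Y_{i-1}^l}{2h}+D\frac{Y_{i+1}^l-2Y_{i}^l+Y_{i-1}^l}{h^2}+e^{\lambda t_l}f_i^l,$$ with $Y_0^l=Y_K^l=0$ for $l=1,\ldots,n$ and initial values $Y_i^0=g(x_i)$, $i=1,\ldots,K-1$, where $$a_{j,k}=\left( \frac{k^r-j^r}{(j+1)^r-j^r}\right)^{1-\alpha}-\left(\frac{k^r-(j+1)^r}{(j+1)^r-j^r}\right)^{1-\alpha}.$$ If $h<\frac{2D}{v}$, then the scheme is stable in the following sense: if $(Y_i^l)$ and $(\tilde Y_i^l)$ are the solutions of the scheme corresponding to initial data $g$ and $\tilde g$ respectively (with the same $f_i^l$), and $\epsilon_i^l=Y_i^l-\tilde Y_i^l$, $\|E^l\|_\infty=\max_{1\le i\le K-1}|\epsilon_i^l|$, then $\|E^l\|_\infty\le \|E^0\|_\infty$ for all $l=1,\ldots,n$.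
   Context: The scheme approximates the solution $y$ of $D_t^{\alpha}y=-v\,\partial_x y+D\,\partial_x^2 y+e^{\lambda t}f(x,t)$ on $(0,L)\times(0,T]$, $y(x,0)=g(x)$, $y(0,t)=y(L,t)=0$, where $D_t^\alpha$ is the Caputo derivative $D_t^\alpha y(t)=\frac{1}{\Gamma(1-\alpha)}\int_0^t (t-s)^{-\alpha}y'(s)\,ds$; here $f_i^l=f(x_i,t_l)$ and $f,g$ are continuous. The function $u=e^{-\lambda t}y$ then solves the tempered problem $\mathbb{D}_t^{\alpha,\lambda}u=-v\partial_xu+D\partial_x^2u+f$ with tempered Caputo derivative $\mathbb{D}_t^{\alpha,\lambda}u=e^{-\lambda t}D_t^\alpha(e^{\lambda t}u)$. *)

theory Defs
  imports "HOL-Analysis.Analysis"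
begin

definition tgrid :: "real \<Rightarrow> nat \<Rightarrow> real \<Rightarrow> nat \<Rightarrow> real" where
  "tgrid T n r j = (real j / real n) powr r * T"

definition tstep :: "real \<Rightarrow> nat \<Rightarrow> real \<Rightarrow> nat \<Rightarrow> real" where
  "tstep T n r j = tgrid T n r (Suc j) - tgrid T n r j"

definition xgrid :: "real \<Rightarrow> nat \<Rightarrow> nat \<Rightarrow> real" where
  "xgrid L K i = real i * (L / real K)"

definition acoef :: "real \<Rightarrow> real \<Rightarrow> nat \<Rightarrow> nat \<Rightarrow> real" where
  "acoef \<alpha> r j k =
     ((real k powr r - real j powr r) / (real (Suc j) powr r - real j powr r)) powr (1 - \<alpha>)
   - ((real k powr r - real (Suc j) powr r) / (real (Suc j) powr r - real j powr r)) powr (1 - \<alpha>)"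

text \<open>Y (indexed Y i l, space index i, time index l) solves the implicit scheme
  with source values f(x_i,t_l) and initial data g.\<close>
definition scheme_sol ::
  "real \<Rightarrow> real \<Rightarrow> real \<Rightarrow> real \<Rightarrow> real \<Rightarrow> real \<Rightarrow> nat \<Rightarrow> nat \<Rightarrow> real
   \<Rightarrow> (real \<Rightarrow> real \<Rightarrow> real) \<Rightarrow> (real \<Rightarrow> real) \<Rightarrow> (nat \<Rightarrow> nat \<Rightarrow> real) \<Rightarrow> bool" where
  "scheme_sol \<alpha> lam v D T L n K r f g Y \<longleftrightarrow>
     (\<forall>l\<in>{1..n}. Y 0 l = 0 \<and> Y K l = 0) \<and>
     (\<forall>i\<in>{1..K-1}. Y i 0 = g (xgrid L K i)) \<and>
     (\<forall>i\<in>{1..K-1}. \<forall>l\<in>{1..n}.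
        (1 / Gamma (2 - \<alpha>)) *
          (\<Sum>j<l. tstep T n r j powr (-\<alpha>) * acoef \<alpha> r j l * (Y i (Suc j) - Y i j))
        = - v * (Y (i+1) l - Y (i-1) l) / (2 * (L / real K))
          + D * (Y (i+1) l - 2 * Y i l + Y (i-1) l) / (L / real K)^2
          + exp (lam * tgrid T n r l) * f (xgrid L K i) (tgrid T n r l))"

definition errnorm :: "nat \<Rightarrow> (nat \<Rightarrow> nat \<Rightarrow> real) \<Rightarrow> (nat \<Rightarrow> nat \<Rightarrow> real) \<Rightarrow> nat \<Rightarrow> real" where
  "errnorm K Y Y' l = Max ((\<lambda>i. \<bar>Y i l - Y' i l\<bar>) ` {1..K-1})"

end

theory Submission
  imports Defs
begin

lemma tangent_powr:
  fixes b q x :: real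
  assumes "0 < b" "b < 1" "0 < q" "0 \<le> x"
  shows "x powr b \<le> q powr b + b * q powr (b - 1) * (x - q)"
proof (cases "x = 0")
  case True
  have "q powr (b-1) * q = q powr b" using assms
    by (simp add: powr_diff)
  have e2: "b * q powr (b - 1) * (x - q) = - (b * (q powr (b-1) * q))" using True by simp
  have e3: "b * q powr b \<le> q powr b" using mult_right_mono[of b 1 "q powr b"] assms by simp
  show ?thesis using True e2 e3 \<open>q powr (b-1) * q = q powr b\<close> by (simp add: mult.assoc)
next
  case False
  hence xp: "x > 0" using assms by simp
  have Y: "x powr b * q powr (1 - b) \<le> b * x + (1 - b) * q"
    using Youngs_inequality_0[of b "1-b" x q] assms xp by simp
  have qq: "q powr (1 - b) * q powr (b - 1) = 1" using assms
    by (simp flip: powr_add)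
  have q2: "q * q powr (b - 1) = q powr b" using assms by (simp add: powr_diff)
  have "x powr b = x powr b * q powr (1 - b) * q powr (b - 1)" using qq by (simp add: mult.assoc)
  also have "\<dots> \<le> (b * x + (1 - b) * q) * q powr (b - 1)"
    using Y by (simp add: mult_right_mono)
  also have "\<dots> = q powr b + b * q powr (b - 1) * (x - q)"
    using q2 by (simp add: algebra_simps)
  finally show ?thesis .
qed

lemma slope_mono:
  fixes b p q w :: real
  assumes "0 < b" "b < 1" "0 \<le> w" "w < q" "q < p"
  shows "(p powr b - q powr b) / (p - q) \<le> (q powr b - w powr b) / (q - w)"
proof -
  have q: "0 < q" using assms by simp
  have 1: "p powr b - q powr b \<le> b * q powr (b - 1) * (p - q)"
    using tangent_powr[OF assms(1,2) q, of p] assms by simp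
  have 2: "b * q powr (b - 1) * (q - w) \<le> q powr b - w powr b"
    using tangent_powr[OF assms(1,2) q, of w] assms by (simp add: right_diff_distrib)
  have "(p powr b - q powr b) / (p - q) \<le> b * q powr (b - 1)"
    using 1 assms by (simp add: divide_le_eq)
  also have "\<dots> \<le> (q powr b - w powr b) / (q - w)"
    using 2 assms by (simp add: le_divide_eq)
  finally show ?thesis .
qed

lemma u_less: "0 < r \<Longrightarrow> j < k \<Longrightarrow> real j powr r < real k powr r"
  by (rule powr_less_mono2) auto

lemma u_le: "0 < r \<Longrightarrow> j \<le> k \<Longrightarrow> real j powr r \<le> real k powr r"
  by (rule powr_mono2) auto

lemma tgrid_eq: "0 < r \<Longrightarrow> tgrid T n r j = T / real n powr r * real j powr r"
  unfolding tgrid_def by (simp add: powr_divide)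

lemma tstep_eq: "0 < r \<Longrightarrow> tstep T n r j = T / real n powr r * (real (Suc j) powr r - real j powr r)"
  unfolding tstep_def by (simp add: tgrid_eq right_diff_distrib)

lemma cc_formula:
  fixes a r T :: real
  assumes "0 < a" "a < 1" "0 < r" "0 < T" "1 \<le> n" "j < l"
  shows "tstep T n r j powr (-a) * acoef a r j l =
    (T / real n powr r) powr (-a) *
     (((real l powr r - real j powr r) powr (1-a) - (real l powr r - real (Suc j) powr r) powr (1-a))
       / (real (Suc j) powr r - real j powr r))"
proof -
  define d where "d = real (Suc j) powr r - real j powr r"
  define C where "C = T / real n powr r"
  define U where "U = real l powr r"
  have d: "0 < d" unfolding d_def using u_less[OF assms(3), of j "Suc j"] by simp
  have C: "0 < C" unfolding C_def using assms by simp
  have U1: "real j powr r \<le> U" unfolding U_def using u_le[OF assms(3), of j l] assms by simp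
  have U2: "real (Suc j) powr r \<le> U" unfolding U_def using u_le[OF assms(3), of "Suc j" l] assms by simp
  have ts: "tstep T n r j = C * d" unfolding C_def d_def using assms tstep_eq by simp
  have ac: "acoef a r j l = ((U - real j powr r) powr (1-a) - (U - real (Suc j) powr r) powr (1-a)) / d powr (1-a)"
    unfolding acoef_def U_def[symmetric] d_def[symmetric]
    using U1 U2 d powr_divide[of "U - real j powr r" d "1-a"] powr_divide[of "U - real (Suc j) powr r" d "1-a"]
    by (simp add: diff_divide_distrib)
  have dd: "d powr (-a) / d powr (1-a) = 1 / d"
  proof -
    have "d powr a * d powr (1 - a) = d" using d by (simp flip: powr_add)
    thus ?thesis using d by (simp add: powr_minus_divide divide_simps)
  qed
  have "tstep T n r j powr (-a) * acoef a r j l = C powr (-a) * (d powr (-a) / d powr (1-a)) *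
     ((U - real j powr r) powr (1-a) - (U - real (Suc j) powr r) powr (1-a))"
    unfolding ts ac using C d by (simp add: powr_mult)
  also have "\<dots> = C powr (-a) * (((U - real j powr r) powr (1-a) - (U - real (Suc j) powr r) powr (1-a)) / d)"
    unfolding dd by simp
  finally show ?thesis unfolding C_def U_def d_def .
qed


lemma cc_pos:
  fixes a r T :: real
  assumes "0 < a" "a < 1" "0 < r" "0 < T" "1 \<le> n" "j < l"
  shows "0 < tstep T n r j powr (-a) * acoef a r j l"
proof -
  have p: "real j powr r < real (Suc j) powr r" using u_less[OF assms(3), of j "Suc j"] by simp
  have q: "real (Suc j) powr r \<le> real l powr r" using u_le[OF assms(3), of "Suc j" l] assms by simp
  have "(real l powr r - real (Suc j) powr r) powr (1-a) < (real l powr r - real j powr r) powr (1-a)"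
    using p q assms by (intro powr_less_mono2) auto
  hence X: "0 < (((real l powr r - real j powr r) powr (1-a) - (real l powr r - real (Suc j) powr r) powr (1-a))
       / (real (Suc j) powr r - real j powr r))" using p by simp
  have P: "0 < (T / real n powr r) powr (-a)" using assms by simp
  show ?thesis unfolding cc_formula[OF assms] by (rule mult_pos_pos[OF P X])
qed

lemma cc_mono:
  fixes a r T :: real
  assumes "0 < a" "a < 1" "0 < r" "0 < T" "1 \<le> n" "Suc j < l"
  shows "tstep T n r j powr (-a) * acoef a r j l \<le> tstep T n r (Suc j) powr (-a) * acoef a r (Suc j) l"
proof -
  define U where "U = real l powr r"
  have p: "real j powr r < real (Suc j) powr r" using u_less[OF assms(3), of j "Suc j"] by simp
  have p2: "real (Suc j) powr r < real (Suc (Suc j)) powr r" using u_less[OF assms(3), of "Suc j" "Suc (Suc j)"] by simp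
  have q: "real (Suc (Suc j)) powr r \<le> U" unfolding U_def using u_le[OF assms(3), of "Suc (Suc j)" l] assms by simp
  have "((U - real j powr r) powr (1-a) - (U - real (Suc j) powr r) powr (1-a)) / ((U - real j powr r) - (U - real (Suc j) powr r))
     \<le> ((U - real (Suc j) powr r) powr (1-a) - (U - real (Suc (Suc j)) powr r) powr (1-a)) / ((U - real (Suc j) powr r) - (U - real (Suc (Suc j)) powr r))"
    using p p2 q assms by (intro slope_mono) auto
  hence X: "(((real l powr r - real j powr r) powr (1-a) - (real l powr r - real (Suc j) powr r) powr (1-a))
       / (real (Suc j) powr r - real j powr r)) \<le>
      (((real l powr r - real (Suc j) powr r) powr (1-a) - (real l powr r - real (Suc (Suc j)) powr r) powr (1-a))
       / (real (Suc (Suc j)) powr r - real (Suc j) powr r))"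
    unfolding U_def by simp
  have P: "0 < (T / real n powr r) powr (-a)" using assms by simp
  show ?thesis unfolding cc_formula[OF assms(1-5) assms(6)] cc_formula[OF assms(1-5) Suc_lessD[OF assms(6)]]
    by (rule mult_left_mono[OF X less_imp_le[OF P]])
qed

lemma abel:
  "(\<Sum>j<Suc m. c j * (E (Suc j) - E j)) = c m * E (Suc m) - (\<Sum>j\<in>{1..m}. (c j - c (j-1)) * E j) - c 0 * (E 0::real)"
  by (induction m) (auto simp: algebra_simps)

lemma tele: fixes c :: "nat \<Rightarrow> real" shows "(\<Sum>j\<in>{1..m}. (c j - c (j-1))) = c m - c 0"
  by (induction m) auto

lemma bound:
  fixes c E :: "nat \<Rightarrow> real"
  assumes "0 \<le> c 0" "\<And>j. j \<in> {1..m} \<Longrightarrow> c (j-1) \<le> c j" "\<And>j. j \<le> m \<Longrightarrow> \<bar>E j\<bar> \<le> M0"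
  shows "\<bar>(\<Sum>j\<in>{1..m}. (c j - c (j-1)) * E j) + c 0 * E 0\<bar> \<le> c m * M0"
proof -
  have "\<bar>\<Sum>j\<in>{1..m}. (c j - c (j-1)) * E j\<bar> \<le> (\<Sum>j\<in>{1..m}. \<bar>(c j - c (j-1)) * E j\<bar>)"
    by (rule sum_abs)
  also have "\<dots> \<le> (\<Sum>j\<in>{1..m}. (c j - c (j-1)) * M0)"
  proof (rule sum_mono)
    fix j assume j: "j \<in> {1..m}"
    have "\<bar>(c j - c (j-1)) * E j\<bar> = (c j - c (j-1)) * \<bar>E j\<bar>" using assms(2)[OF j] by (simp add: abs_mult)
    also have "\<dots> \<le> (c j - c (j-1)) * M0" using assms(2)[OF j] assms(3)[of j] j by (intro mult_left_mono) auto
    finally show "\<bar>(c j - c (j-1)) * E j\<bar> \<le> (c j - c (j-1)) * M0" .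
  qed
  also have "\<dots> = (\<Sum>j\<in>{1..m}. (c j - c (j-1))) * M0" by (rule sum_distrib_right[symmetric])
  also have "\<dots> = (c m - c 0) * M0" unfolding tele ..
  finally have 1: "\<bar>\<Sum>j\<in>{1..m}. (c j - c (j-1)) * E j\<bar> \<le> (c m - c 0) * M0" .
  have 2: "\<bar>c 0 * E 0\<bar> \<le> c 0 * M0" using assms(1) assms(3)[of 0] by (simp add: abs_mult mult_left_mono)
  have "\<bar>(\<Sum>j\<in>{1..m}. (c j - c (j-1)) * E j) + c 0 * E 0\<bar> \<le> (c m - c 0) * M0 + c 0 * M0"
    using 1 2 abs_triangle_ineq[of "\<Sum>j\<in>{1..m}. (c j - c (j-1)) * E j" "c 0 * E 0"] by linarith
  thus ?thesis by (simp add: algebra_simps)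
qed


theorem mainTheorem1:
  fixes \<alpha> lam v D T L r :: real and n K :: nat
    and f :: "real \<Rightarrow> real \<Rightarrow> real" and g g' :: "real \<Rightarrow> real"
    and Y Y' :: "nat \<Rightarrow> nat \<Rightarrow> real"
  assumes "0 < \<alpha>" "\<alpha> < 1" "0 \<le> lam" "0 < v" "0 < D" "0 < T" "0 < L"
    and "1 \<le> n" "2 \<le> K" "1 \<le> r"
    and "continuous_on ({0..L} \<times> {0..T}) (\<lambda>(x, t). f x t)"
    and "continuous_on {0..L} g" "continuous_on {0..L} g'"
    and "L / real K < 2 * D / v"
    and "scheme_sol \<alpha> lam v D T L n K r f g Y"
    and "scheme_sol \<alpha> lam v D T L n K r f g' Y'"
  shows "\<forall>l\<in>{1..n}. errnorm K Y Y' l \<le> errnorm K Y Y' 0"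
proof -
  define h where "h = L / real K"
  define e where "e i j = Y i j - Y' i j" for i j
  define M where "M l = errnorm K Y Y' l" for l
  define S where "S = {1..K-1}"
  define G where "G = 1 / Gamma (2 - \<alpha>)"
  have r0: "0 < r" using assms by simp
  have h0: "0 < h" unfolding h_def using assms by simp
  have G0: "0 < G" unfolding G_def using assms by simp
  have finS: "finite S" and neS: "S \<noteq> {}" unfolding S_def using assms by auto
  have Mge: "\<bar>e i l\<bar> \<le> M l" if "i \<in> S" for i l
    unfolding M_def errnorm_def e_def S_def[symmetric] using finS that by (intro Max_ge) auto
  have Marg: "\<exists>i\<in>S. M l = \<bar>e i l\<bar>" for l
  proof -
    have "Max ((\<lambda>i. \<bar>Y i l - Y' i l\<bar>) ` S) \<in> (\<lambda>i. \<bar>Y i l - Y' i l\<bar>) ` S"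
      using finS neS by (intro Max_in) auto
    thus ?thesis unfolding M_def errnorm_def e_def S_def[symmetric] by auto
  qed
  have M0: "0 \<le> M l" for l using Marg[of l] by auto
  have AB: "v / (2 * h) \<le> D / h^2"
  proof -
    have "h * v < 2 * D" using assms(14) assms(4) unfolding h_def[symmetric] by (simp add: field_simps)
    thus ?thesis using h0 by (simp add: field_simps power2_eq_square)
  qed
  define A where "A = D / h^2 - v / (2 * h)"
  define B where "B = D / h^2 + v / (2 * h)"
  have A0: "0 \<le> A" unfolding A_def using AB by simp
  have B0: "0 \<le> B" unfolding B_def using assms h0 by simp
  have SY: "scheme_sol \<alpha> lam v D T L n K r f g Y" and SY': "scheme_sol \<alpha> lam v D T L n K r f g' Y'"
    using assms by auto
  have key: "M l \<le> M 0" if l: "l \<in> {1..n}" and IH: "\<And>j. j < l \<Longrightarrow> M j \<le> M 0" for l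
  proof -
    obtain i where i: "i \<in> S" and Mi: "M l = \<bar>e i l\<bar>" using Marg by blast
    obtain m where lm: "l = Suc m" using l by (cases l) auto
    define c where "c j = G * (tstep T n r j powr (-\<alpha>) * acoef \<alpha> r j l)" for j
    have iS: "i \<in> {1..K-1}" using i unfolding S_def .
    have EY: "G * (\<Sum>j<l. tstep T n r j powr (-\<alpha>) * acoef \<alpha> r j l * (Y i (Suc j) - Y i j))
        = - v * (Y (i+1) l - Y (i-1) l) / (2 * h) + D * (Y (i+1) l - 2 * Y i l + Y (i-1) l) / h^2
          + exp (lam * tgrid T n r l) * f (xgrid L K i) (tgrid T n r l)"
      using SY iS l unfolding scheme_sol_def G_def h_def by auto
    have EY': "G * (\<Sum>j<l. tstep T n r j powr (-\<alpha>) * acoef \<alpha> r j l * (Y' i (Suc j) - Y' i j))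
        = - v * (Y' (i+1) l - Y' (i-1) l) / (2 * h) + D * (Y' (i+1) l - 2 * Y' i l + Y' (i-1) l) / h^2
          + exp (lam * tgrid T n r l) * f (xgrid L K i) (tgrid T n r l)"
      using SY' iS l unfolding scheme_sol_def G_def h_def by auto
    have "(\<Sum>j<l. c j * (e i (Suc j) - e i j)) =
        G * (\<Sum>j<l. tstep T n r j powr (-\<alpha>) * acoef \<alpha> r j l * (Y i (Suc j) - Y i j))
      - G * (\<Sum>j<l. tstep T n r j powr (-\<alpha>) * acoef \<alpha> r j l * (Y' i (Suc j) - Y' i j))"
      unfolding c_def e_def by (simp add: sum_distrib_left sum_subtractf[symmetric] algebra_simps)
    also have "\<dots> = A * e (i+1) l + B * e (i-1) l - (A + B) * e i l"
      unfolding EY EY' A_def B_def e_def using h0 by (simp add: field_simps power2_eq_square)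
    finally have E1: "(\<Sum>j<l. c j * (e i (Suc j) - e i j)) = A * e (i+1) l + B * e (i-1) l - (A + B) * e i l" .
    define R where "R = (\<Sum>j\<in>{1..m}. (c j - c (j-1)) * e i j) + c 0 * e i 0"
    have E2: "c m * e i l - R = A * e (i+1) l + B * e (i-1) l - (A + B) * e i l"
      using E1 abel[where c=c and m=m and E="\<lambda>j. e i j"] unfolding R_def lm by simp
    have c0: "0 < c 0" unfolding c_def using cc_pos[of \<alpha> r T n 0 l] assms l G0 by simp
    have cmono: "c (j-1) \<le> c j" if "j \<in> {1..m}" for j
    proof -
      have "Suc (j-1) < l" "Suc (j - 1) = j" using that lm by auto
      thus ?thesis unfolding c_def using cc_mono[of \<alpha> r T n "j-1" l] assms G0 by (simp add: mult_left_mono)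
    qed
    have "0 \<le> (\<Sum>j\<in>{1..m}. (c j - c (j-1)))" by (rule sum_nonneg) (use cmono in auto)
    hence cm: "c 0 \<le> c m" using tele[where c=c and m=m] by linarith
    have Rb: "\<bar>R\<bar> \<le> c m * M 0" unfolding R_def
    proof (rule bound)
      show "0 \<le> c 0" using c0 by simp
      show "c (j-1) \<le> c j" if "j \<in> {1..m}" for j using cmono that .
      show "\<bar>e i j\<bar> \<le> M 0" if "j \<le> m" for j using Mge[OF i, of j] IH[of j] that lm by simp
    qed
    have bnd: "\<bar>e i' l\<bar> \<le> M l" if "i' = 0 \<or> i' = K \<or> i' \<in> S" for i'
    proof -
      have "Y 0 l = 0 \<and> Y K l = 0" "Y' 0 l = 0 \<and> Y' K l = 0"
        using SY SY' l unfolding scheme_sol_def by auto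
      thus ?thesis using that Mge[of i' l] M0[of l] unfolding e_def by auto
    qed
    have y: "\<bar>e (i+1) l\<bar> \<le> M l" using iS by (intro bnd) (auto simp: S_def)
    have z: "\<bar>e (i-1) l\<bar> \<le> M l" using iS by (intro bnd) (auto simp: S_def)
    have "(c m + A + B) * e i l = A * e (i+1) l + B * e (i-1) l + R" using E2 by (simp add: algebra_simps)
    hence eqa: "\<bar>(c m + A + B) * e i l\<bar> = \<bar>A * e (i+1) l + B * e (i-1) l + R\<bar>" by simp
    have pos: "0 \<le> c m + A + B" using c0 cm A0 B0 by simp
    have "(c m + A + B) * M l = \<bar>A * e (i+1) l + B * e (i-1) l + R\<bar>"
      unfolding Mi eqa[symmetric] abs_mult using pos by simp
    also have "\<dots> \<le> \<bar>A * e (i+1) l\<bar> + \<bar>B * e (i-1) l\<bar> + \<bar>R\<bar>"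
      using abs_triangle_ineq[of "A * e (i+1) l + B * e (i-1) l" R]
        abs_triangle_ineq[of "A * e (i+1) l" "B * e (i-1) l"] by linarith
    also have "\<dots> = A * \<bar>e (i+1) l\<bar> + B * \<bar>e (i-1) l\<bar> + \<bar>R\<bar>"
      using A0 B0 by (simp add: abs_mult)
    also have "\<dots> \<le> A * M l + B * M l + c m * M 0"
      using mult_left_mono[OF y A0] mult_left_mono[OF z B0] Rb by linarith
    finally have fin: "c m * M l \<le> c m * M 0" by (simp add: algebra_simps)
    have cmp: "0 < c m" using c0 cm by simp
    show ?thesis by (rule mult_left_le_imp_le[OF fin cmp])
  qed
  have "\<forall>l. l \<le> n \<longrightarrow> M l \<le> M 0"
  proof (intro allI)
    fix l show "l \<le> n \<longrightarrow> M l \<le> M 0"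
    proof (induction l rule: less_induct)
      case (less l)
      show ?case
      proof (cases "l = 0")
        case True thus ?thesis by simp
      next
        case False
        show ?thesis using key[of l] less False by auto
      qed
    qed
  qed
  thus ?thesis unfolding M_def by auto
qed

end
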